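(* Let $S$ be an AG-groupoid with left identity $e$, and let $P$ be a left ideal of $S$. Then $P$ is quasi-prime if and only if for all $a,b\in S$, $(Sa)b\subseteq P$ implies $a\in P$ or $b\in P$.
   Context: An AG-groupoid is a set $S$ with a binary operation satisfying $(ab)c=(cb)a$ for all $a,b,c\in S$. A left identity is an element $e$ with $ea=a$ for all $a\in S$. For nonempty subsets, $AB=\{ab:a\in A,b\in B\}$; for $a\in S$, $Sa=\{sa:s\in S\}$ and $(Sa)b=\{(sa)b: s\in S\}$. A left ideal is a nonempty subset $I$ with $SI\subseteq I$. A left ideal $P$ is quasi-prime if for all left ideals $A,B$ of $S$, $AB\subseteq P$ implies $A\subseteq P$ or $B\subseteq P$. *)

theory Defs
  imports Main
begin

definition AG_groupoid :: "'a set \<Rightarrow> ('a \<Rightarrow> 'a \<Rightarrow> 'a) \<Rightarrow> bool" where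
  "AG_groupoid S m \<longleftrightarrow> (\<forall>a\<in>S. \<forall>b\<in>S. m a b \<in> S) \<and>
     (\<forall>a\<in>S. \<forall>b\<in>S. \<forall>c\<in>S. m (m a b) c = m (m c b) a)"

definition left_identity :: "'a set \<Rightarrow> ('a \<Rightarrow> 'a \<Rightarrow> 'a) \<Rightarrow> 'a \<Rightarrow> bool" where
  "left_identity S m e \<longleftrightarrow> e \<in> S \<and> (\<forall>a\<in>S. m e a = a)"

definition setmult :: "('a \<Rightarrow> 'a \<Rightarrow> 'a) \<Rightarrow> 'a set \<Rightarrow> 'a set \<Rightarrow> 'a set" where
  "setmult m A B = {m a b | a b. a \<in> A \<and> b \<in> B}"

definition left_ideal :: "'a set \<Rightarrow> ('a \<Rightarrow> 'a \<Rightarrow> 'a) \<Rightarrow> 'a set \<Rightarrow> bool" where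
  "left_ideal S m I \<longleftrightarrow> I \<noteq> {} \<and> I \<subseteq> S \<and> setmult m S I \<subseteq> I"

definition quasi_prime :: "'a set \<Rightarrow> ('a \<Rightarrow> 'a \<Rightarrow> 'a) \<Rightarrow> 'a set \<Rightarrow> bool" where
  "quasi_prime S m P \<longleftrightarrow> left_ideal S m P \<and>
     (\<forall>A B. left_ideal S m A \<longrightarrow> left_ideal S m B \<longrightarrow>
        setmult m A B \<subseteq> P \<longrightarrow> A \<subseteq> P \<or> B \<subseteq> P)"

end

theory Submission
  imports Defs
begin

lemma ag_medial:
  assumes "AG_groupoid S m" "a\<in>S" "b\<in>S" "c\<in>S" "d\<in>S"
  shows "m (m a b) (m c d) = m (m a c) (m b d)"
proof -
  have cl: "\<And>x y. x\<in>S \<Longrightarrow> y\<in>S \<Longrightarrow> m x y \<in> S" and li: "\<And>x y z. x\<in>S \<Longrightarrow> y\<in>S \<Longrightarrow> z\<in>S \<Longrightarrow> m (m x y) z = m (m z y) x"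
    using assms(1) unfolding AG_groupoid_def by blast+
  have "m (m a b) (m c d) = m (m (m c d) b) a" using li[of a b "m c d"] cl[of c d] assms by simp
  also have "m (m c d) b = m (m b d) c" using li[of c d b] assms by simp
  also have "m (m (m b d) c) a = m (m a c) (m b d)" using li[of "m b d" c a] cl[of b d] assms by simp
  finally show ?thesis .
qed

lemma ag_swap:
  assumes "AG_groupoid S m" "left_identity S m e" "a\<in>S" "b\<in>S" "c\<in>S"
  shows "m a (m b c) = m b (m a c)"
proof -
  have e: "e \<in> S" "\<And>x. x\<in>S \<Longrightarrow> m e x = x" using assms(2) unfolding left_identity_def by auto
  have "m a (m b c) = m (m e a) (m b c)" using e assms by simp
  also have "\<dots> = m (m e b) (m a c)" using ag_medial[OF assms(1) e(1) assms(3,4,5)] .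
  also have "\<dots> = m b (m a c)" using e assms by simp
  finally show ?thesis .
qed

lemma ag_paramedial:
  assumes "AG_groupoid S m" "left_identity S m e" "a\<in>S" "b\<in>S" "c\<in>S" "d\<in>S"
  shows "m (m a b) (m c d) = m (m d b) (m c a)"
proof -
  have cl: "\<And>x y. x\<in>S \<Longrightarrow> y\<in>S \<Longrightarrow> m x y \<in> S" and li: "\<And>x y z. x\<in>S \<Longrightarrow> y\<in>S \<Longrightarrow> z\<in>S \<Longrightarrow> m (m x y) z = m (m z y) x"
    using assms(1) unfolding AG_groupoid_def by blast+
  have "m (m a b) (m c d) = m c (m (m a b) d)" using ag_swap[OF assms(1,2) cl[of a b] assms(5,6)] assms by simp
  also have "m (m a b) d = m (m d b) a" using li[of a b d] assms by simp
  also have "m c (m (m d b) a) = m (m d b) (m c a)" using ag_swap[OF assms(1,2) assms(5) cl[of d b] assms(3)] assms by simp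
  finally show ?thesis .
qed

lemma Sa_left_ideal:
  assumes "AG_groupoid S m" "left_identity S m e" "a\<in>S"
  shows "left_ideal S m {m s a | s. s \<in> S}"
proof -
  have cl: "\<And>x y. x\<in>S \<Longrightarrow> y\<in>S \<Longrightarrow> m x y \<in> S" and li: "\<And>x y z. x\<in>S \<Longrightarrow> y\<in>S \<Longrightarrow> z\<in>S \<Longrightarrow> m (m x y) z = m (m z y) x"
    using assms(1) unfolding AG_groupoid_def by blast+
  have e: "e \<in> S" "\<And>x. x\<in>S \<Longrightarrow> m e x = x" using assms(2) unfolding left_identity_def by auto
  have "m s (m t a) \<in> {m s a | s. s \<in> S}" if "s\<in>S" "t\<in>S" for s t
  proof -
    have "m s (m t a) = m (m e s) (m t a)" using e that by simp
    also have "\<dots> = m (m a s) (m t e)" using ag_paramedial[OF assms(1,2) e(1) that(1) that(2) assms(3)] .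
    also have "\<dots> = m (m (m t e) s) a" using li[of a s "m t e"] cl[of t e] e that assms by simp
    finally show ?thesis using cl e that by blast
  qed
  thus ?thesis unfolding left_ideal_def setmult_def using cl assms(3) by blast
qed

theorem theorem4:
  fixes S :: "'a set" and m :: "'a \<Rightarrow> 'a \<Rightarrow> 'a" and e :: 'a and P :: "'a set"
  assumes "AG_groupoid S m"
    and "left_identity S m e"
    and "left_ideal S m P"
  shows "quasi_prime S m P \<longleftrightarrow>
    (\<forall>a\<in>S. \<forall>b\<in>S. {m (m s a) b | s. s \<in> S} \<subseteq> P \<longrightarrow> a \<in> P \<or> b \<in> P)"
proof
  have cl: "\<And>x y. x\<in>S \<Longrightarrow> y\<in>S \<Longrightarrow> m x y \<in> S"
    using assms(1) unfolding AG_groupoid_def by blast+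
  have e: "e \<in> S" "\<And>x. x\<in>S \<Longrightarrow> m e x = x" using assms(2) unfolding left_identity_def by auto
  have PS: "P \<subseteq> S" and SP: "\<And>s p. s\<in>S \<Longrightarrow> p\<in>P \<Longrightarrow> m s p \<in> P"
    using assms(3) unfolding left_ideal_def setmult_def by blast+
  {
    assume q: "quasi_prime S m P"
    show "\<forall>a\<in>S. \<forall>b\<in>S. {m (m s a) b | s. s \<in> S} \<subseteq> P \<longrightarrow> a \<in> P \<or> b \<in> P"
    proof (intro ballI impI)
      fix a b assume a: "a\<in>S" and b: "b\<in>S" and sub: "{m (m s a) b | s. s \<in> S} \<subseteq> P"
      have prod: "setmult m {m s a | s. s \<in> S} {m s b | s. s \<in> S} \<subseteq> P"
      proof
        fix x assume "x \<in> setmult m {m s a | s. s \<in> S} {m s b | s. s \<in> S}"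
        then obtain s t where st: "s\<in>S" "t\<in>S" "x = m (m s a) (m t b)" unfolding setmult_def by blast
        have "x = m t (m (m s a) b)" using ag_swap[OF assms(1,2) cl[OF st(1) a] st(2) b] st by simp
        moreover have "m (m s a) b \<in> P" using sub st by blast
        ultimately show "x \<in> P" using SP st by simp
      qed
      have "{m s a | s. s \<in> S} \<subseteq> P \<or> {m s b | s. s \<in> S} \<subseteq> P"
        using q[unfolded quasi_prime_def] prod Sa_left_ideal[OF assms(1,2) a] Sa_left_ideal[OF assms(1,2) b]
        by (meson conjunct2 spec mp)
      moreover have "a \<in> {m s a | s. s \<in> S}" "b \<in> {m s b | s. s \<in> S}" using e a b by force+
      ultimately show "a \<in> P \<or> b \<in> P" by blast
    qed
  }
  {
    assume h: "\<forall>a\<in>S. \<forall>b\<in>S. {m (m s a) b | s. s \<in> S} \<subseteq> P \<longrightarrow> a \<in> P \<or> b \<in> P"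
    show "quasi_prime S m P" unfolding quasi_prime_def
    proof (intro conjI allI impI assms(3))
      fix A B assume A: "left_ideal S m A" and B: "left_ideal S m B" and AB: "setmult m A B \<subseteq> P"
      have AS: "A \<subseteq> S" and SA: "\<And>s p. s\<in>S \<Longrightarrow> p\<in>A \<Longrightarrow> m s p \<in> A"
        using A unfolding left_ideal_def setmult_def by blast+
      have BS: "B \<subseteq> S" using B unfolding left_ideal_def by blast
      show "A \<subseteq> P \<or> B \<subseteq> P"
      proof (rule disjCI)
        assume "\<not> B \<subseteq> P"
        then obtain b where b: "b\<in>B" "b\<notin>P" by blast
        show "A \<subseteq> P"
        proof
          fix a assume a: "a\<in>A"
          have "{m (m s a) b | s. s \<in> S} \<subseteq> P"
          proof
            fix x assume "x \<in> {m (m s a) b | s. s \<in> S}"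
            then obtain s where "s\<in>S" "x = m (m s a) b" by blast
            hence "x \<in> setmult m A B" using SA[of s a] a b unfolding setmult_def by blast
            thus "x \<in> P" using AB by blast
          qed
          moreover have "a \<in> S" "b \<in> S" using a b AS BS by auto
          ultimately show "a \<in> P" using h b(2) by blast
        qed
      qed
    qed
  }
qed

end
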